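(* Let $n$ and $s$ be positive integers. Let $f$ be a nonzero $n$-variable Boolean function with $\deg(f)\ge s-1$, and let $D\subseteq\mathbb{F}_2^n$ be its support. Then ${FAI}(f)\ge s$ if and only if $$\mathrm{RM}(e,n)^{\overline{D}}\cap\left(\mathrm{RM}(e+n-s,n)^{\overline{D}}\right)^{\perp}=\{\mathbf 0\}$$ holds for every integer $e$ with $1\le e\le n$.
   Context: An $n$-variable Boolean function is a map $\mathbb{F}_2^n\to\mathbb{F}_2$; its algebraic degree $\deg$ is the degree of its algebraic normal form (its unique representation as a multilinear polynomial over $\mathbb{F}_2$). The support of $f$ is $\{x: f(x)=1\}$ and $wt(f)$ is its size. ${AN}^c(f)$ denotes the set of $n$-variable Boolean functions $g$ with $f\cdot g\neq 0$ (pointwise product). The fast algebraic immunity ${FAI}(f)$ is the minimum of $\deg(g)+\deg(f\cdot g)$ over all $g\in{AN}^c(f)$ with $g\neq 1$. For an integer $r$, the Reed–Muller code $\mathrm{RM}(r,n)\subseteq\mathbb{F}_2^{\mathbb{F}_2^n}$ is the set of value vectors $(h(x))_{x\in\mathbb{F}_2^n}$ of $n$-variable Boolean functions $h$ with $\deg(h)\le r$ (so for $r\ge n$ it is the whole space). For a code $\mathcal C$ with coordinates indexed by a set $X$ and a subset $E\subseteq X$, the punctured code $\mathcal C^{E}$ is obtained by deleting the coordinates in $E$ from every codeword; $\overline{D}=\mathbb{F}_2^n\setminus D$, so $\mathrm{RM}(r,n)^{\overline D}=\{(h(x))_{x\in D}:\deg h\le r\}\subseteq\mathbb{F}_2^{D}$.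 The dual $\mathcal C^\perp$ is with respect to the standard (Euclidean) inner product on $\mathbb{F}_2^{D}$. *)

theory Defs
  imports Main
begin

text \<open>Variables are indexed by a finite type 'n, with n = CARD('n).
  A point of F_2^n is a map 'n \<Rightarrow> bool (True = 1), and an n-variable
  Boolean function is a map ('n \<Rightarrow> bool) \<Rightarrow> bool.  Addition in F_2 is
  exclusive or, multiplication is conjunction.\<close>

type_synonym 'n bfun = "('n \<Rightarrow> bool) \<Rightarrow> bool"

text \<open>Coefficient of the monomial prod_{i in S} x_i in the algebraic normal form
  (Moebius transform): a_S = sum over x with supp x \<subseteq> S of f x  (mod 2).\<close>
definition anf_coeff :: "'n bfun \<Rightarrow> 'n set \<Rightarrow> bool" where
  "anf_coeff f S = odd (card {x. (\<forall>i. x i \<longrightarrow> i \<in> S) \<and> f x})"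

definition deg :: "('n::finite) bfun \<Rightarrow> nat" where
  "deg f = Max (insert 0 {card S | S. anf_coeff f S})"

definition bsupp :: "'n bfun \<Rightarrow> ('n \<Rightarrow> bool) set" where
  "bsupp f = {x. f x}"

definition ANc :: "'n bfun \<Rightarrow> 'n bfun set" where
  "ANc f = {g. (\<lambda>x. f x \<and> g x) \<noteq> (\<lambda>x. False)}"

definition FAI :: "('n::finite) bfun \<Rightarrow> nat" where
  "FAI f = Min {deg g + deg (\<lambda>x. f x \<and> g x) | g. g \<in> ANc f \<and> g \<noteq> (\<lambda>x. True)}"

text \<open>Reed-Muller code RM(r,n) as a set of value vectors (functions on F_2^n) of
  functions of degree at most r (r an integer; for r < 0 only the zero function,
  every ANF coefficient of which vanishes).\<close>
definition RM :: "int \<Rightarrow> ('n::finite) bfun set" where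
  "RM r = {h. \<forall>S. anf_coeff h S \<longrightarrow> int (card S) \<le> r}"

text \<open>Vectors of F_2^D are represented as functions F_2^n \<rightarrow> bool vanishing off D.
  Puncturing C on the complement of D = restricting codewords to D.\<close>
definition punct_to :: "('n \<Rightarrow> bool) set \<Rightarrow> 'n bfun set \<Rightarrow> 'n bfun set" where
  "punct_to D C = {(\<lambda>x. x \<in> D \<and> c x) | c. c \<in> C}"

definition dual_in :: "('n \<Rightarrow> bool) set \<Rightarrow> 'n bfun set \<Rightarrow> 'n bfun set" where
  "dual_in D C = {v. (\<forall>x. x \<notin> D \<longrightarrow> \<not> v x) \<and>
                     (\<forall>c\<in>C. even (card {x\<in>D. v x \<and> c x}))}"

end

theory Submission
  imports Defs
begin

lemma card_interval_sets:
  fixes A X :: "'n::finite set"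
  assumes "A \<subseteq> X"
  shows "card {S. A \<subseteq> S \<and> S \<subseteq> X} = 2 ^ card (X - A)"
proof -
  have "{S. A \<subseteq> S \<and> S \<subseteq> X} = (\<lambda>B. A \<union> B) ` Pow (X - A)"
    using assms by (auto simp: image_def)
  moreover have "inj_on (\<lambda>B. A \<union> B) (Pow (X - A))"
    by (auto simp: inj_on_def)
  ultimately show ?thesis by (simp add: card_image card_Pow)
qed

lemma card_pts:
  fixes U :: "'n::finite set"
  shows "card {x::'n\<Rightarrow>bool. U \<subseteq> {i. x i}} = 2 ^ (card (UNIV :: 'n set) - card U)"
proof -
  have "{x::'n\<Rightarrow>bool. U \<subseteq> {i. x i}} = (\<lambda>B i. i \<in> U \<or> i \<in> B) ` Pow (- U)"
  proof (rule set_eqI, rule iffI)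
    fix x :: "'n \<Rightarrow> bool" assume "x \<in> {x. U \<subseteq> {i. x i}}"
    then have "x = (\<lambda>i. i \<in> U \<or> i \<in> {i. x i} - U)" by auto
    then show "x \<in> (\<lambda>B i. i \<in> U \<or> i \<in> B) ` Pow (- U)" by blast
  qed auto
  moreover have "inj_on (\<lambda>B i. i \<in> U \<or> i \<in> B) (Pow (- U))"
    by (auto simp: inj_on_def fun_eq_iff)
  ultimately show ?thesis by (simp add: card_image card_Pow Compl_eq_Diff_UNIV card_Diff_subset)
qed

lemma card_as_sum: "finite A \<Longrightarrow> card {y\<in>A. P y} = (\<Sum>y\<in>A. if P y then 1 else (0::nat))"
  by (simp add: sum.If_cases Int_def)

lemma mobius:
  fixes f :: "('n::finite) bfun"
  shows "f x = odd (card {S. S \<subseteq> {i. x i} \<and> anf_coeff f S})"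
proof -
  define X where "X = {i. x i}"
  define N where "N S = card {y. (\<forall>i. y i \<longrightarrow> i \<in> S) \<and> f y}" for S
  define G where "G y = (if f y \<and> {i. y i} \<subseteq> X then 2 ^ card (X - {i. y i}) else (0::nat))" for y :: "'n \<Rightarrow> bool"
  have e1: "{S. S \<subseteq> X \<and> anf_coeff f S} = {S \<in> Pow X. odd (N S)}"
    by (auto simp: anf_coeff_def N_def)
  have NS: "N S = (\<Sum>y\<in>UNIV. if {i. y i} \<subseteq> S \<and> f y then 1 else 0)" for S
  proof -
    have "N S = card {y\<in>UNIV. {i. y i} \<subseteq> S \<and> f y}" unfolding N_def
      by (rule arg_cong[where f=card]) auto
    then show ?thesis using card_as_sum[of UNIV "\<lambda>y. {i. y i} \<subseteq> S \<and> f y"] by simp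
  qed
  have "sum N (Pow X) = (\<Sum>S\<in>Pow X. \<Sum>y\<in>UNIV. if {i. y i} \<subseteq> S \<and> f y then 1 else 0)"
    by (simp add: NS)
  also have "\<dots> = (\<Sum>y\<in>UNIV. \<Sum>S\<in>Pow X. if {i. y i} \<subseteq> S \<and> f y then 1 else 0)"
    by (rule sum.swap)
  also have "\<dots> = sum G UNIV"
  proof (rule sum.cong[OF refl])
    fix y :: "'n \<Rightarrow> bool"
    have "(\<Sum>S\<in>Pow X. if {i. y i} \<subseteq> S \<and> f y then 1 else 0) = card {S\<in>Pow X. {i. y i} \<subseteq> S \<and> f y}"
      by (rule card_as_sum[symmetric]) simp
    also have "\<dots> = G y"
    proof (cases "f y \<and> {i. y i} \<subseteq> X")
      case True
      then have "{S\<in>Pow X. {i. y i} \<subseteq> S \<and> f y} = {S. {i. y i} \<subseteq> S \<and> S \<subseteq> X}" by auto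
      then show ?thesis using True card_interval_sets[of "{i. y i}" X] by (simp add: G_def)
    next
      case False
      then have "{S\<in>Pow X. {i. y i} \<subseteq> S \<and> f y} = {}" by blast
      then show ?thesis unfolding G_def by (subst if_not_P[OF False]) simp
    qed
    finally show "(\<Sum>S\<in>Pow X. if {i. y i} \<subseteq> S \<and> f y then 1 else 0) = G y" .
  qed
  finally have sN: "sum N (Pow X) = sum G UNIV" .
  have oG: "odd (G y) \<longleftrightarrow> f y \<and> y = x" for y
  proof
    assume "odd (G y)"
    then have h: "f y \<and> {i. y i} \<subseteq> X \<and> card (X - {i. y i}) = 0"
      by (auto simp: G_def split: if_splits)
    then have "X - {i. y i} = {}" by simp
    with h have "{i. y i} = X" by auto
    then have "y = x" unfolding X_def by (auto simp: fun_eq_iff)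
    with h show "f y \<and> y = x" by simp
  next
    assume "f y \<and> y = x"
    then have "f y" "y = x" by auto
    then show "odd (G y)" by (simp add: G_def X_def)
  qed
  have "even (card {S. S \<subseteq> X \<and> anf_coeff f S}) = even (sum N (Pow X))"
    by (simp add: e1 even_sum_iff)
  also have "\<dots> = even (card {y\<in>UNIV. odd (G y)})"
    by (simp add: sN even_sum_iff)
  also have "{y\<in>UNIV. odd (G y)} = (if f x then {x} else {})"
    using oG by auto
  finally show ?thesis unfolding X_def by auto
qed

lemma orth:
  fixes u c :: "('n::finite) bfun"
  assumes A: "\<And>S T. anf_coeff u S \<Longrightarrow> anf_coeff c T \<Longrightarrow> card S + card T < card (UNIV::'n set)"
  shows "even (card {x. u x \<and> c x})"
proof -
  define Au where "Au = {S. anf_coeff u S}"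
  define Ac where "Ac = {T. anf_coeff c T}"
  define a where "a x = (\<Sum>S\<in>Au. if S \<subseteq> {i. x i} then 1 else (0::nat))" for x :: "'n \<Rightarrow> bool"
  define b where "b x = (\<Sum>T\<in>Ac. if T \<subseteq> {i. x i} then 1 else (0::nat))" for x :: "'n \<Rightarrow> bool"
  have ua: "u x = odd (a x)" for x
  proof -
    have "a x = card {S\<in>Au. S \<subseteq> {i. x i}}" unfolding a_def by (rule card_as_sum[symmetric]) simp
    also have "{S\<in>Au. S \<subseteq> {i. x i}} = {S. S \<subseteq> {i. x i} \<and> anf_coeff u S}" by (auto simp: Au_def)
    finally show ?thesis using mobius[of u x] by simp
  qed
  have cb: "c x = odd (b x)" for x
  proof -
    have "b x = card {S\<in>Ac. S \<subseteq> {i. x i}}" unfolding b_def by (rule card_as_sum[symmetric]) simp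
    also have "{S\<in>Ac. S \<subseteq> {i. x i}} = {S. S \<subseteq> {i. x i} \<and> anf_coeff c S}" by (auto simp: Ac_def)
    finally show ?thesis using mobius[of c x] by simp
  qed
  have "{x. u x \<and> c x} = {x\<in>UNIV. odd (a x * b x)}" by (auto simp: ua cb)
  then have "even (card {x. u x \<and> c x}) = even (\<Sum>x\<in>UNIV. a x * b x)"
    by (simp add: even_sum_iff)
  also have "(\<Sum>x\<in>UNIV. a x * b x) = (\<Sum>x\<in>UNIV. \<Sum>S\<in>Au. \<Sum>T\<in>Ac. if S \<union> T \<subseteq> {i. x i} then 1 else (0::nat))"
    unfolding a_def b_def by (simp add: sum_product; intro sum.cong refl; auto)
  also have "\<dots> = (\<Sum>S\<in>Au. \<Sum>T\<in>Ac. \<Sum>x\<in>UNIV. if S \<union> T \<subseteq> {i. x i} then 1 else (0::nat))"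
    by (simp add: sum.swap[of _ UNIV])
  also have "\<dots> = (\<Sum>S\<in>Au. \<Sum>T\<in>Ac. 2 ^ (card (UNIV::'n set) - card (S \<union> T)))"
  proof (intro sum.cong refl)
    fix S T assume "S \<in> Au" "T \<in> Ac"
    have "(\<Sum>x\<in>UNIV. if S \<union> T \<subseteq> {i. x i} then 1 else (0::nat)) = card {x\<in>UNIV. S \<union> T \<subseteq> {i. x i}}"
      by (rule card_as_sum[symmetric]) simp
    then show "(\<Sum>x\<in>UNIV. if S \<union> T \<subseteq> {i. x i} then 1 else (0::nat)) = 2 ^ (card (UNIV::'n set) - card (S \<union> T))"
      using card_pts[of "S \<union> T"] by simp
  qed
  also have "even \<dots>"
  proof (intro dvd_sum)
    fix S T assume "S \<in> Au" "T \<in> Ac"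
    then have "card S + card T < card (UNIV::'n set)" using A by (auto simp: Au_def Ac_def)
    moreover have "card (S \<union> T) \<le> card S + card T" by (rule card_Un_le)
    ultimately have "card (UNIV::'n set) - card (S \<union> T) \<noteq> 0" by linarith
    then show "(2::nat) dvd 2 ^ (card (UNIV::'n set) - card (S \<union> T))" by simp
  qed
  finally show ?thesis by simp
qed

lemma finite_degset: "finite {card S | S. anf_coeff (h::('n::finite) bfun) S}"
proof -
  have "{card S | S. anf_coeff h S} \<subseteq> card ` (UNIV :: 'n set set)" by auto
  then show ?thesis by (rule finite_subset) simp
qed

lemma deg_ge: "anf_coeff (h::('n::finite) bfun) S \<Longrightarrow> card S \<le> deg h"
  unfolding deg_def by (rule Max_ge) (use finite_degset[of h] in auto)

lemma deg_le: "(\<And>S. anf_coeff (h::('n::finite) bfun) S \<Longrightarrow> card S \<le> d) \<Longrightarrow> deg h \<le> d"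
  unfolding deg_def using finite_degset[of h] by (subst Max_le_iff) auto

lemma deg_le_n: "deg (h::('n::finite) bfun) \<le> card (UNIV :: 'n set)"
  by (rule deg_le) (simp add: card_mono)

lemma in_RM_deg: "(h::('n::finite) bfun) \<in> RM (int (deg h))"
  unfolding RM_def using deg_ge by auto

lemma deg0_const:
  assumes "deg (g::('n::finite) bfun) = 0"
  shows "g = (\<lambda>_. anf_coeff g {})"
proof
  fix x
  have "{S. S \<subseteq> {i. x i} \<and> anf_coeff g S} = (if anf_coeff g {} then {{}} else {})"
    using deg_ge[of g] assms by (auto simp: card_eq_0_iff)
  then show "g x = anf_coeff g {}" using mobius[of g x] by simp
qed

lemma card_sub: "card {x::('n::finite)\<Rightarrow>bool. {i. x i} \<subseteq> W} = 2 ^ card W"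
proof -
  have "{x::'n\<Rightarrow>bool. {i. x i} \<subseteq> W} = (\<lambda>B i. i \<in> B) ` Pow W"
  proof (rule set_eqI, rule iffI)
    fix x :: "'n \<Rightarrow> bool" assume "x \<in> {x. {i. x i} \<subseteq> W}"
    then have "x = (\<lambda>i. i \<in> {i. x i})" "{i. x i} \<in> Pow W" by auto
    then show "x \<in> (\<lambda>B i. i \<in> B) ` Pow W" by blast
  qed auto
  moreover have "inj_on (\<lambda>B i. i \<in> B) (Pow (W::'n set))"
    by (auto simp: inj_on_def fun_eq_iff)
  ultimately show ?thesis by (simp add: card_image card_Pow)
qed

lemma hS_anf:
  assumes "anf_coeff (\<lambda>x::('n::finite)\<Rightarrow>bool. \<forall>i. x i \<longrightarrow> i \<in> S) T"
  shows "card T \<le> card (UNIV :: 'n set) - card S"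
proof -
  have "{x::'n\<Rightarrow>bool. (\<forall>i. x i \<longrightarrow> i \<in> T) \<and> (\<forall>i. x i \<longrightarrow> i \<in> S)} = {x. {i. x i} \<subseteq> T \<inter> S}"
    by auto
  then have "odd (card {x::'n\<Rightarrow>bool. {i. x i} \<subseteq> T \<inter> S})" using assms by (simp add: anf_coeff_def)
  then have "odd ((2::nat) ^ card (T \<inter> S))" by (metis card_sub)
  then have "card (T \<inter> S) = 0" by (cases "card (T \<inter> S)") auto
  then have "T \<subseteq> - S" by auto
  then have "card T \<le> card (- S)" by (simp add: card_mono)
  then show ?thesis by (simp add: Compl_eq_Diff_UNIV card_Diff_subset)
qed

theorem theorem2:
  fixes f :: "('n::finite) bfun" and s :: nat
  assumes "s \<ge> 1"
    and "f \<noteq> (\<lambda>x. False)"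
    and "deg f \<ge> s - 1"
    and "D = bsupp f"
  shows "FAI f \<ge> s \<longleftrightarrow>
    (\<forall>e::int. 1 \<le> e \<and> e \<le> int (card (UNIV :: 'n set)) \<longrightarrow>
       punct_to D (RM e) \<inter> dual_in D (punct_to D (RM (e + int (card (UNIV :: 'n set)) - int s)))
         = {(\<lambda>x. False)})"
proof -
  note s1 = assms(1) and degf = assms(3)
  define n where "n = card (UNIV :: 'n set)"
  have Dx: "x \<in> D \<longleftrightarrow> f x" for x using assms(4) by (simp add: bsupp_def)
  define Q where "Q = {deg g + deg (\<lambda>x. f x \<and> g x) | g. g \<in> ANc f \<and> g \<noteq> (\<lambda>x. True)}"
  have finQ: "finite Q"
  proof -
    have "Q \<subseteq> (\<lambda>g. deg g + deg (\<lambda>x. f x \<and> g x)) ` UNIV" by (auto simp: Q_def)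
    then show ?thesis by (rule finite_subset) simp
  qed
  have neQ: "Q \<noteq> {}"
  proof (cases "f = (\<lambda>x. True)")
    case True
    obtain i0 :: 'n where True by simp
    define g where "g = (\<lambda>x::'n\<Rightarrow>bool. x i0)"
    have "g \<in> ANc f" using True by (auto simp: ANc_def g_def fun_eq_iff)
    moreover have "g \<noteq> (\<lambda>x. True)" by (auto simp: g_def fun_eq_iff)
    ultimately show ?thesis by (auto simp: Q_def)
  next
    case False
    have "f \<in> ANc f" using assms(2) by (simp add: ANc_def)
    with False show ?thesis by (auto simp: Q_def)
  qed
  have FAIiff: "FAI f \<ge> s \<longleftrightarrow> (\<forall>g. g \<in> ANc f \<and> g \<noteq> (\<lambda>x. True) \<longrightarrow> s \<le> deg g + deg (\<lambda>x. f x \<and> g x))"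
    unfolding FAI_def using finQ neQ by (subst Min_ge_iff) (auto simp: Q_def[symmetric], auto simp: Q_def)
  have zero_in: "(\<lambda>x. False) \<in> punct_to D (RM e) \<inter> dual_in D C" for e C
  proof -
    have "(\<lambda>x::'n\<Rightarrow>bool. False) \<in> RM e" by (simp add: RM_def anf_coeff_def)
    then have "(\<lambda>x. False) \<in> punct_to D (RM e)" unfolding punct_to_def by force
    moreover have "(\<lambda>x. False) \<in> dual_in D C" by (simp add: dual_in_def)
    ultimately show ?thesis by simp
  qed
  show ?thesis unfolding FAIiff n_def[symmetric]
  proof
    assume L: "\<forall>g. g \<in> ANc f \<and> g \<noteq> (\<lambda>x. True) \<longrightarrow> s \<le> deg g + deg (\<lambda>x. f x \<and> g x)"
    show "\<forall>e::int. 1 \<le> e \<and> e \<le> int n \<longrightarrow>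
       punct_to D (RM e) \<inter> dual_in D (punct_to D (RM (e + int n - int s))) = {(\<lambda>x. False)}"
    proof (intro allI impI)
      fix e :: int assume e: "1 \<le> e \<and> e \<le> int n"
      show "punct_to D (RM e) \<inter> dual_in D (punct_to D (RM (e + int n - int s))) = {(\<lambda>x. False)}"
      proof (rule ccontr)
        assume "punct_to D (RM e) \<inter> dual_in D (punct_to D (RM (e + int n - int s))) \<noteq> {(\<lambda>x. False)}"
        with zero_in obtain w where w1: "w \<in> punct_to D (RM e)"
          and w2: "w \<in> dual_in D (punct_to D (RM (e + int n - int s)))" and w0: "w \<noteq> (\<lambda>x. False)"
          by blast
        from w1 obtain g where wg: "w = (\<lambda>x. x \<in> D \<and> g x)" and gRM: "g \<in> RM e"
          unfolding punct_to_def by blast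
        define u where "u = (\<lambda>x. f x \<and> g x)"
        have wu: "w = u" by (auto simp: wg u_def Dx)
        have hS: "int (card S) < int s - e" if aS: "anf_coeff u S" for S
        proof (rule ccontr)
          assume "\<not> int (card S) < int s - e"
          define h where "h = (\<lambda>x::'n\<Rightarrow>bool. \<forall>i. x i \<longrightarrow> i \<in> S)"
          have "h \<in> RM (e + int n - int s)"
            unfolding RM_def
          proof (intro CollectI allI impI)
            fix T assume "anf_coeff h T"
            then have "card T \<le> n - card S" unfolding h_def n_def by (rule hS_anf)
            moreover have "card S \<le> n" unfolding n_def by (simp add: card_mono)
            ultimately show "int (card T) \<le> e + int n - int s"
              using \<open>\<not> int (card S) < int s - e\<close> by linarith
          qed
          then have "(\<lambda>x. x \<in> D \<and> h x) \<in> punct_to D (RM (e + int n - int s))"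
            unfolding punct_to_def by blast
          moreover have "\<forall>c\<in>punct_to D (RM (e + int n - int s)). even (card {x\<in>D. w x \<and> c x})"
            using w2 unfolding dual_in_def by blast
          ultimately have "even (card {x\<in>D. w x \<and> (\<lambda>x. x \<in> D \<and> h x) x})"
            by (rule bspec[rotated])
          then have "even (card {x\<in>D. w x \<and> (x \<in> D \<and> h x)})" by simp
          moreover have "{x\<in>D. w x \<and> (x \<in> D \<and> h x)} = {x. (\<forall>i. x i \<longrightarrow> i \<in> S) \<and> u x}"
            by (auto simp: wu h_def Dx u_def)
          ultimately show False using aS by (simp add: anf_coeff_def)
        qed
        from w0 obtain x0 where "u x0" by (auto simp: wu fun_eq_iff)
        then obtain S0 where "anf_coeff u S0" using mobius[of u x0] by fastforce
        then have se: "int s - e \<ge> 1" using hS by fastforce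
        have degu: "int (deg u) \<le> int s - e - 1"
        proof -
          have "deg u \<le> nat (int s - e - 1)"
            by (rule deg_le) (use hS in fastforce)
          then show ?thesis using se by linarith
        qed
        have degg: "int (deg g) \<le> e"
        proof -
          have "deg g \<le> nat e" by (rule deg_le) (use gRM in \<open>auto simp: RM_def\<close>)
          then show ?thesis using e by linarith
        qed
        show False
        proof (cases "g = (\<lambda>x. True)")
          case True
          then have "u = f" by (simp add: u_def)
          then have "int (deg f) \<le> int s - e - 1" using degu by simp
          moreover have "int s - 1 \<le> int (deg f)" using degf s1 by linarith
          ultimately show False using e by linarith
        next
          case False
          have "g \<in> ANc f" using w0 by (simp add: ANc_def wu[unfolded u_def])
          with False L have "s \<le> deg g + deg u" by (simp add: u_def)
          then show False using degu degg by linarith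
        qed
      qed
    qed
  next
    assume R: "\<forall>e::int. 1 \<le> e \<and> e \<le> int n \<longrightarrow>
       punct_to D (RM e) \<inter> dual_in D (punct_to D (RM (e + int n - int s))) = {(\<lambda>x. False)}"
    show "\<forall>g. g \<in> ANc f \<and> g \<noteq> (\<lambda>x. True) \<longrightarrow> s \<le> deg g + deg (\<lambda>x. f x \<and> g x)"
    proof (intro allI impI)
      fix g assume g: "g \<in> ANc f \<and> g \<noteq> (\<lambda>x. True)"
      define u where "u = (\<lambda>x. f x \<and> g x)"
      have u0: "u \<noteq> (\<lambda>x. False)" using g by (simp add: ANc_def u_def)
      show "s \<le> deg g + deg (\<lambda>x. f x \<and> g x)"
      proof (rule ccontr)
        assume "\<not> s \<le> deg g + deg (\<lambda>x. f x \<and> g x)"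
        then have lt: "deg g + deg u < s" by (simp add: u_def)
        define e where "e = int (deg g)"
        have g0: "g \<noteq> (\<lambda>x. False)" using u0 by (auto simp: u_def)
        have "deg g \<noteq> 0"
        proof
          assume "deg g = 0"
          then have "g = (\<lambda>_. anf_coeff g {})" by (rule deg0_const)
          then show False using g g0 by (cases "anf_coeff g {}") auto
        qed
        then have e1: "1 \<le> e" by (simp add: e_def)
        have e2: "e \<le> int n" by (simp add: e_def n_def deg_le_n)
        define w where "w = (\<lambda>x. x \<in> D \<and> g x)"
        have "w \<in> punct_to D (RM e)" unfolding punct_to_def w_def e_def using in_RM_deg[of g] by blast
        moreover have "w \<in> dual_in D (punct_to D (RM (e + int n - int s)))"
          unfolding dual_in_def
        proof (intro CollectI conjI allI impI ballI)
          fix x assume "x \<notin> D" then show "\<not> w x" by (simp add: w_def)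
        next
          fix c assume "c \<in> punct_to D (RM (e + int n - int s))"
          then obtain h where ch: "c = (\<lambda>x. x \<in> D \<and> h x)" and hRM: "h \<in> RM (e + int n - int s)"
            unfolding punct_to_def by blast
          have "{x \<in> D. w x \<and> c x} = {x. u x \<and> h x}" by (auto simp: w_def ch u_def Dx)
          moreover have "even (card {x. u x \<and> h x})"
          proof (rule orth)
            fix S T assume "anf_coeff u S" "anf_coeff h T"
            then have "card S \<le> deg u" "int (card T) \<le> e + int n - int s"
              using deg_ge[of u S] hRM by (auto simp: RM_def)
            then show "card S + card T < card (UNIV :: 'n set)"
              using lt unfolding n_def e_def by linarith
          qed
          ultimately show "even (card {x \<in> D. w x \<and> c x})" by simp
        qed
        moreover have "w \<noteq> (\<lambda>x. False)" using u0 by (auto simp: w_def u_def Dx fun_eq_iff)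
        ultimately show False using R e1 e2 by blast
      qed
    qed
  qed
qed

end
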